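(* Let $n\ge1$, let $d\ge1$ be a square-free integer and let $L(\mathbf{X})=\sum_{i,j=1}^n a_{ij}x_{ij}\in\mathbb{Z}[\mathbf{X}]$ be a linear form in the $n^2$ variables $\mathbf{X}=(x_{ij})_{i,j=1}^n$. Let $D=\gcd(L,d)$ be the greatest common divisor of $d$ and all coefficients $a_{ij}$. Define \[ S_d(L)=\sum_{\substack{\mathbf{X}\in\mathbb{Z}_{d}^{n\times n}\\ \det\mathbf{X}\equiv0 \bmod d}}\exp\left(2\pi i\,L(\mathbf{X})/d\right). \] Then \[ |S_d(L)|\le d^{n^2+o(1)}\begin{cases}(D/d)^n & \text{if $L$ is a monomial},\\ (D/d)^{(n+1)/2} & \text{otherwise},\end{cases} \] where $o(1)$ denotes a quantity tending to $0$ as $d\to\infty$, uniformly in $L$ (depending only on $n$).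
   Context: $\mathbb{Z}_{d}$ denotes the residue ring modulo $d$, represented by $\{0,\dots,d-1\}$. "$L$ is a monomial" means exactly one coefficient $a_{ij}$ is nonzero. *)

theory Defs
  imports "HOL-Analysis.Analysis" "HOL-Computational_Algebra.Squarefree"
begin

text \<open>Matrices X in Z_d^{n x n} are represented by integer matrices with entries in {0..<d};
  the index type 'n has CARD('n) = n elements.\<close>

definition residue_matrices :: "nat \<Rightarrow> (int^'n^'n) set" where
  "residue_matrices d = {X. \<forall>i j. X$i$j \<in> {0..<int d}}"

definition linform :: "int^'n^'n \<Rightarrow> int^'n^'n \<Rightarrow> int" where
  "linform a X = (\<Sum>i\<in>UNIV. \<Sum>j\<in>UNIV. a$i$j * X$i$j)"

definition S_sum :: "nat \<Rightarrow> int^'n^'n \<Rightarrow> complex" where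
  "S_sum d a = (\<Sum>X\<in>{X\<in>residue_matrices d. int d dvd det X}.
      exp (2 * of_real pi * \<i> * of_int (linform a X) / of_nat d))"

definition gcd_form :: "int^'n^'n \<Rightarrow> nat \<Rightarrow> int" where
  "gcd_form a d = Gcd (insert (int d) {a$i$j | i j. True})"

definition is_monomial :: "int^'n^'n \<Rightarrow> bool" where
  "is_monomial a \<longleftrightarrow> card {(i,j). a$i$j \<noteq> 0} = 1"

end

theory Submission
  imports Defs
begin


definition ee :: "nat \<Rightarrow> int \<Rightarrow> complex" where
  "ee m k = exp (2 * of_real pi * \<i> * of_int k / of_nat m)"

lemma ee_add: "ee m (x + y) = ee m x * ee m y"
  unfolding ee_def by (simp add: exp_add[symmetric] add_divide_distrib distrib_left)

lemma ee_norm: "norm (ee m k) = 1"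
  unfolding ee_def by (simp add: norm_exp_eq_Re)

lemma ee_mult_m: assumes "m > 0" shows "ee m (int m * j) = 1"
proof -
  have "2 * of_real pi * \<i> * of_int (int m * j) / of_nat m = (2 * of_int j * pi) * \<i>"
    using assms by (simp add: field_simps)
  then show ?thesis unfolding ee_def using exp_integer_2pi[of "of_int j"] by simp
qed

lemma ee_cong: assumes "m > 0" "x mod int m = y mod int m" shows "ee m x = ee m y"
proof -
  have "int m dvd x - y" using assms(2) by (simp add: mod_eq_dvd_iff)
  then have "int m dvd y - x" by (simp add: dvd_diff_commute)
  then obtain k where "y - x = int m * k" by (elim dvdE)
  then have "y = x + int m * k" by simp
  then show ?thesis using ee_add ee_mult_m[OF assms(1)] by simp
qed

lemma ee_eq_1: assumes "m > 0" shows "ee m b = 1 \<longleftrightarrow> int m dvd b"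
proof
  assume "int m dvd b"
  then obtain j where "b = int m * j" by blast
  then show "ee m b = 1" using ee_mult_m[OF assms] by simp
next
  assume "ee m b = 1"
  then obtain n :: int where n: "Im (2 * of_real pi * \<i> * of_int b / of_nat m) = of_int (2 * n) * pi"
    unfolding ee_def exp_eq_1 by blast
  have "Im (2 * of_real pi * \<i> * of_int b / of_nat m) = 2 * pi * b / m"
    by (simp add: Im_divide_of_nat)
  with n have "2 * pi * b / m = 2 * n * pi" by simp
  then have "real_of_int b = real m * n" using assms by (simp add: field_simps)
  then have "real_of_int b = real_of_int (int m * n)" by simp
  then have "b = int m * n" by (simp only: of_int_eq_iff)
  then show "int m dvd b" by simp
qed

lemma ee_pow: "ee m (b * int i) = ee m b ^ i"
proof (induction i)
  case 0
  then show ?case by (simp add: ee_def)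
next
  case (Suc i)
  have "b * int (Suc i) = b * int i + b" by (simp add: algebra_simps)
  then show ?case using Suc ee_add by simp
qed

lemma orth1:
  assumes "m > 0"
  shows "(\<Sum>y\<in>{0..<int m}. ee m (b * y)) = (if int m dvd b then of_nat m else 0)"
proof -
  have "{0..<int m} = int ` {..<m}" using image_int_atLeastLessThan[of 0 m] by (simp add: lessThan_atLeast0)
  then have "(\<Sum>y\<in>{0..<int m}. ee m (b * y)) = (\<Sum>i<m. ee m (b * int i))"
    by (simp add: sum.reindex)
  also have "\<dots> = (\<Sum>i<m. ee m b ^ i)" by (simp add: ee_pow)
  also have "\<dots> = (if int m dvd b then of_nat m else 0)"
  proof (cases "int m dvd b")
    case True
    then have "ee m b = 1" using ee_eq_1[OF assms] by simp
    then show ?thesis using True by simp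
  next
    case False
    then have "ee m b \<noteq> 1" using ee_eq_1[OF assms] by simp
    moreover have "ee m b ^ m = 1" using ee_pow[of m b m] ee_mult_m[OF assms, of b]
      by (simp add: mult.commute)
    ultimately show ?thesis using False by (simp add: sum_gp_strict)
  qed
  finally show ?thesis .
qed

lemma ee_0[simp]: "ee m 0 = 1" by (simp add: ee_def)

lemma ee_sum: "finite I \<Longrightarrow> ee m (sum f I) = (\<Prod>i\<in>I. ee m (f i))"
  by (induction I rule: finite_induct) (simp_all add: ee_add)

lemma vec_bij: "bij_betw vec_lambda (PiE UNIV A) {x::'a^'n. \<forall>i. x$i \<in> A i}"
proof (rule bij_betwI[where g = vec_nth])
  show "vec_lambda \<in> PiE UNIV A \<rightarrow> {x::'a^'n. \<forall>i. x $ i \<in> A i}" by auto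
  show "vec_nth \<in> {x::'a^'n. \<forall>i. x $ i \<in> A i} \<rightarrow> PiE UNIV A" by auto
qed auto

lemma finite_vecset: "(\<And>i. finite (A i)) \<Longrightarrow> finite {x::'a^'n. \<forall>i. x$i \<in> A i}"
  using bij_betw_finite[OF vec_bij, of A] by (simp add: finite_PiE)

lemma card_vecset: "card {x::'a^'n. \<forall>i. x$i \<in> A i} = (\<Prod>i\<in>UNIV. card (A i))"
  using bij_betw_same_card[OF vec_bij, of A] by (simp add: card_PiE)

lemma sum_prod_vecset:
  fixes f :: "'n::finite \<Rightarrow> 'a \<Rightarrow> 'c::comm_semiring_1"
  assumes "\<And>i. finite (A i)"
  shows "(\<Sum>x\<in>{x::'a^'n. \<forall>i. x$i \<in> A i}. \<Prod>i\<in>UNIV. f i (x$i)) = (\<Prod>i\<in>UNIV. \<Sum>y\<in>A i. f i y)"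
proof -
  have "(\<Sum>x\<in>{x::'a^'n. \<forall>i. x$i \<in> A i}. \<Prod>i\<in>UNIV. f i (x$i))
      = (\<Sum>g\<in>PiE UNIV A. \<Prod>i\<in>UNIV. f i (vec_lambda g $ i))"
    using sum.reindex_bij_betw[OF vec_bij, of "\<lambda>x. \<Prod>i\<in>UNIV. f i (x$i)" A] by simp
  also have "\<dots> = (\<Sum>g\<in>PiE UNIV A. \<Prod>i\<in>UNIV. f i (g i))" by simp
  also have "\<dots> = (\<Prod>i\<in>UNIV. \<Sum>y\<in>A i. f i y)"
    using prod_sum_PiE[of UNIV A f] assms by simp
  finally show ?thesis .
qed

definition box :: "nat \<Rightarrow> (int^'n) set" where
  "box m = {v. \<forall>i. v$i \<in> {0..<int m}}"

definition ip :: "int^'n \<Rightarrow> int^'n \<Rightarrow> int" where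
  "ip b v = (\<Sum>i\<in>UNIV. b$i * v$i)"

lemma finite_box: "finite (box m)"
  unfolding box_def by (rule finite_vecset) simp

lemma card_box: "card (box m :: (int^'n) set) = m ^ CARD('n)"
  unfolding box_def card_vecset by simp

lemma orthn:
  fixes b :: "int^'n"
  assumes "m > 0"
  shows "(\<Sum>v\<in>box m. ee m (ip b v)) = (if \<forall>i. int m dvd b$i then of_nat m ^ CARD('n) else 0)"
proof -
  have "(\<Sum>v\<in>box m. ee m (ip b v)) = (\<Sum>v\<in>box m. \<Prod>i\<in>UNIV. ee m (b$i * v$i))"
    unfolding ip_def by (simp add: ee_sum)
  also have "\<dots> = (\<Prod>i\<in>UNIV. \<Sum>y\<in>{0..<int m}. ee m (b$i * y))"
    unfolding box_def by (rule sum_prod_vecset) simp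
  also have "\<dots> = (\<Prod>i\<in>UNIV. if int m dvd b$i then of_nat m else 0)"
    using orth1[OF assms] by simp
  also have "\<dots> = (if \<forall>i. int m dvd b$i then of_nat m ^ CARD('n) else 0)"
  proof (cases "\<forall>i. int m dvd b$i")
    case True
    then show ?thesis by simp
  next
    case False
    then obtain i where "\<not> int m dvd b$i" by blast
    then show ?thesis using False by (intro trans[OF prod_zero]) auto
  qed
  finally show ?thesis .
qed

definition upd :: "int^'n^'n \<Rightarrow> 'n \<Rightarrow> int^'n \<Rightarrow> int^'n^'n" where
  "upd Y l v = (\<chi> i. if i = l then v else Y$i)"

definition cof :: "int^'n^'n \<Rightarrow> 'n \<Rightarrow> int^'n" where
  "cof Y l = (\<chi> k. det (upd Y l (axis k 1)))"

lemma vec_axis_sum: "(v::int^'n) = (\<Sum>k\<in>UNIV. v$k *s axis k 1)"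
proof -
  have "\<And>i. (\<Sum>x\<in>UNIV. v$x * (if i = x then 1 else 0)) = v$i"
  proof -
    fix i
    have "\<And>x. v$x * (if i = x then 1 else 0) = (if i = x then v$x else 0)" by simp
    then show "(\<Sum>x\<in>UNIV. v$x * (if i = x then 1 else 0)) = v$i" by (simp add: sum.delta)
  qed
  then show ?thesis by (simp add: vec_eq_iff axis_def)
qed

lemma det_upd: fixes Y :: "int^'n^'n" shows "det (upd Y l v) = ip (cof Y l) v"
proof -
  have "upd Y l v = (\<chi> i. if i = l then (\<Sum>k\<in>UNIV. v$k *s axis k 1) else Y$i)"
  proof -
    have e: "(\<Sum>k\<in>UNIV. v$k *s axis k 1) = v" by (rule vec_axis_sum[symmetric])
    show ?thesis by (simp only: upd_def e)
  qed
  then have "det (upd Y l v) = (\<Sum>k\<in>UNIV. det ((\<chi> i. if i = l then v$k *s axis k 1 else Y$i)::int^'n^'n))"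
    using det_linear_row_sum[of UNIV l "\<lambda>i k. v$k *s axis k 1" "\<lambda>i. Y$i"] by simp
  also have "\<dots> = (\<Sum>k\<in>UNIV. v$k * det (upd Y l (axis k 1)))"
    unfolding upd_def by (simp add: det_row_mul)
  finally show ?thesis unfolding ip_def cof_def by (simp add: mult.commute)
qed

lemma cof_orth: assumes "j \<noteq> l" shows "ip (cof Y l) (Y$j) = 0"
proof -
  have "det (upd Y l (Y$j)) = 0"
    by (rule det_identical_rows[of j l]) (use assms in \<open>auto simp: row_def upd_def vec_eq_iff\<close>)
  then show ?thesis by (rule trans[OF det_upd[symmetric]])
qed

lemma cof_upd: "cof (upd Y l v) l = cof Y l"
  unfolding cof_def upd_def by (simp cong: if_cong)

lemma mod_sum_cong:
  assumes "\<And>x. x \<in> A \<Longrightarrow> f x mod (m::int) = g x mod m"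
  shows "sum f A mod m = sum g A mod m"
proof -
  have "sum f A mod m = (\<Sum>x\<in>A. f x mod m) mod m" by (simp only: mod_sum_eq)
  also have "(\<Sum>x\<in>A. f x mod m) = (\<Sum>x\<in>A. g x mod m)" using assms by (rule sum.cong[OF refl])
  also have "(\<Sum>x\<in>A. g x mod m) mod m = sum g A mod m" by (simp only: mod_sum_eq)
  finally show ?thesis .
qed

lemma det_mod:
  assumes "\<And>i j. X$i$j mod m = X'$i$j mod m"
  shows "det X mod m = det X' mod (m::int)"
proof -
  have "\<And>p. (of_int (sign p) * (\<Prod>i\<in>UNIV. X$i$p i)) mod m = (of_int (sign p) * (\<Prod>i\<in>UNIV. X'$i$p i)) mod m"
  proof -
    fix p :: "'a \<Rightarrow> 'a"
    have "(\<Prod>i\<in>UNIV. X$i$p i) mod m = (\<Prod>i\<in>UNIV. X$i$p i mod m) mod m" by (simp add: mod_prod_eq)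
    also have "\<dots> = (\<Prod>i\<in>UNIV. X'$i$p i mod m) mod m" using assms by simp
    also have "\<dots> = (\<Prod>i\<in>UNIV. X'$i$p i) mod m" by (simp add: mod_prod_eq)
    finally show "(of_int (sign p) * (\<Prod>i\<in>UNIV. X$i$p i)) mod m = (of_int (sign p) * (\<Prod>i\<in>UNIV. X'$i$p i)) mod m"
      by (rule mod_mult_cong[OF refl])
  qed
  then show ?thesis unfolding det_def
    by (intro mod_sum_cong)
qed

lemma linform_mod:
  assumes "\<And>i j. X$i$j mod m = X'$i$j mod m"
  shows "linform a X mod m = linform a X' mod (m::int)"
proof -
  have "\<And>i j. (a$i$j * X$i$j) mod m = (a$i$j * X'$i$j) mod m"
    by (rule mod_mult_cong[OF refl assms])
  then have h: "\<And>i. (\<Sum>j\<in>UNIV. a$i$j * X$i$j) mod m = (\<Sum>j\<in>UNIV. a$i$j * X'$i$j) mod m"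
    by (rule mod_sum_cong)
  show ?thesis unfolding linform_def
    by (rule mod_sum_cong) (rule h)
qed



definition R0 :: "nat \<Rightarrow> 'n \<Rightarrow> (int^'n^'n) set" where
  "R0 m l = {Y. \<forall>i. Y$i \<in> (if i = l then {0} else box m)}"

lemma residue_box: "residue_matrices m = {X::int^'n^'n. \<forall>i. X$i \<in> box m}"
  unfolding residue_matrices_def box_def by auto

lemma finite_residue: "finite (residue_matrices m :: (int^'n^'n) set)"
  unfolding residue_box by (rule finite_vecset) (rule finite_box)

lemma card_residue: "card (residue_matrices m :: (int^'n^'n) set) = m ^ (CARD('n) * CARD('n))"
  unfolding residue_box card_vecset by (simp add: card_box power_mult)

lemma finite_R0: "finite (R0 m l)"
  unfolding R0_def by (rule finite_vecset) (simp add: finite_box)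

lemma decomp:
  fixes F :: "int^'n^'n \<Rightarrow> 'c::comm_monoid_add"
  shows "(\<Sum>X\<in>residue_matrices m. F X) = (\<Sum>Y\<in>R0 m l. \<Sum>v\<in>box m. F (upd Y l v))"
proof -
  have bij: "bij_betw (\<lambda>(Y,v). upd Y l v) (R0 m l \<times> box m) (residue_matrices m)"
  proof (rule bij_betwI[where g = "\<lambda>X. (upd X l 0, X$l)"])
    show "(\<lambda>(Y, v). upd Y l v) \<in> R0 m l \<times> box m \<rightarrow> residue_matrices m"
      by (auto simp: R0_def residue_box upd_def split: if_splits)
    show "(\<lambda>X. (upd X l 0, X $ l)) \<in> residue_matrices m \<rightarrow> R0 m l \<times> box m"
      by (auto simp: R0_def residue_box upd_def)
    show "\<And>x. x \<in> R0 m l \<times> box m \<Longrightarrow> (upd (case x of (Y, v) \<Rightarrow> upd Y l v) l 0, (case x of (Y, v) \<Rightarrow> upd Y l v) $ l) = x"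
      by (auto simp: R0_def upd_def vec_eq_iff split: if_splits)
    show "\<And>y. y \<in> residue_matrices m \<Longrightarrow> (case (upd y l 0, y $ l) of (Y, v) \<Rightarrow> upd Y l v) = y"
      by (auto simp: upd_def vec_eq_iff)
  qed
  have "(\<Sum>X\<in>residue_matrices m. F X) = (\<Sum>x\<in>R0 m l \<times> box m. F (case x of (Y,v) \<Rightarrow> upd Y l v))"
    using sum.reindex_bij_betw[OF bij, of F] by (simp add: case_prod_unfold)
  also have "\<dots> = (\<Sum>(Y,v)\<in>R0 m l \<times> box m. F (upd Y l v))"
    by (intro sum.cong) auto
  also have "\<dots> = (\<Sum>Y\<in>R0 m l. \<Sum>v\<in>box m. F (upd Y l v))"
    by (simp add: sum.cartesian_product)
  finally show ?thesis .
qed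

lemma ip_lin: "ip (t *s c + b) v = t * ip c v + ip b v"
  unfolding ip_def by (simp add: sum_distrib_left sum.distrib algebra_simps)

lemma ip_smult: "ip (t *s c) v = t * ip c v"
  unfolding ip_def by (simp add: sum_distrib_left algebra_simps)

lemma ip_zero[simp]: "ip b 0 = 0"
  unfolding ip_def by simp

lemma linform_ip: "linform a X = (\<Sum>i\<in>UNIV. ip (a$i) (X$i))"
  unfolding linform_def ip_def by simp

lemma linform_upd:
  assumes "Y$l = 0"
  shows "linform a (upd Y l v) = linform a Y + ip (a$l) v"
proof -
  have "\<And>i. ip (a$i) (upd Y l v $ i) = ip (a$i) (Y$i) + (if i = l then ip (a$l) v else 0)"
    using assms by (simp add: upd_def)
  then show ?thesis unfolding linform_ip by (simp add: sum.distrib)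
qed

lemma inner_sum:
  fixes Y :: "int^'n^'n"
  assumes "Y$l = 0" "m > 0"
  shows "(\<Sum>v\<in>box m. ee m (t * det (upd Y l v) + linform a (upd Y l v)))
       = ee m (linform a Y) * (if \<forall>i. int m dvd (t * cof Y l $ i + a$l$i) then of_nat m ^ CARD('n) else 0)"
proof -
  have "\<And>v. t * det (upd Y l v) + linform a (upd Y l v) = linform a Y + ip (t *s cof Y l + a$l) v"
    using assms(1) by (simp add: det_upd linform_upd ip_lin)
  then have "(\<Sum>v\<in>box m. ee m (t * det (upd Y l v) + linform a (upd Y l v)))
      = ee m (linform a Y) * (\<Sum>v\<in>box m. ee m (ip (t *s cof Y l + a$l) v))"
    by (simp add: ee_add sum_distrib_left)
  also have "\<dots> = ee m (linform a Y) * (if \<forall>i. int m dvd (t * cof Y l $ i + a$l$i) then of_nat m ^ CARD('n) else 0)"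
    using orthn[OF assms(2), of "t *s cof Y l + a$l"] by simp
  finally show ?thesis .
qed

lemma sum_ind:
  fixes c :: "'c::comm_semiring_1"
  assumes "finite A"
  shows "(\<Sum>x\<in>A. if P x then c else 0) = c * of_nat (card {x\<in>A. P x})"
proof -
  have "(\<Sum>x\<in>A. if P x then c else 0) = (\<Sum>x\<in>{x\<in>A. P x}. c)"
    using sum.inter_filter[OF assms, of "\<lambda>_. c" P] by simp
  then show ?thesis by (simp add: mult.commute)
qed

lemma t_zero:
  assumes "prime p" "\<not> int p dvd b$k" "t \<in> {0..<int p}"
  shows "(\<forall>i. int p dvd t * b$i) \<longleftrightarrow> t = 0"
proof
  assume "\<forall>i. int p dvd t * b$i"
  then have "int p dvd t * b$k" by blast
  then have "int p dvd t" using assms(1,2) prime_dvd_mult_iff[of "int p"] by auto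
  show "t = 0"
  proof (rule ccontr)
    assume "t \<noteq> 0"
    then have "t > 0" using assms(3) by simp
    have "int p \<le> t" by (rule zdvd_imp_le[OF \<open>int p dvd t\<close> \<open>t > 0\<close>])
    then show False using assms(3) by simp
  qed
qed simp

lemma hyper_card:
  fixes b :: "int^'n"
  assumes "prime p" "\<not> int p dvd b$k"
  shows "card {v\<in>box p. int p dvd ip b v} = p ^ (CARD('n) - 1)"
proof -
  have p0: "p > 0" using assms(1) prime_gt_0_nat by blast
  have orth_b: "\<And>c::int^'n. (\<Sum>v\<in>box p. ee p (ip c v)) = (if \<forall>i. int p dvd c$i then of_nat p ^ CARD('n) else 0)"
    by (rule orthn[OF p0])
  have "of_nat p * of_nat (card {v\<in>box p. int p dvd ip b v})
      = (\<Sum>v\<in>box p. if int p dvd ip b v then (of_nat p :: complex) else 0)"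
    by (rule sum_ind[OF finite_box, symmetric])
  also have "\<dots> = (\<Sum>v\<in>box p. \<Sum>t\<in>{0..<int p}. ee p (ip b v * t))"
    using orth1[OF p0] by simp
  also have "\<dots> = (\<Sum>t\<in>{0..<int p}. \<Sum>v\<in>box p. ee p (ip (t *s b) v))"
    by (subst sum.swap) (simp add: ip_smult mult.commute)
  also have "\<dots> = (\<Sum>t\<in>{0..<int p}. if \<forall>i. int p dvd (t *s b)$i then of_nat p ^ CARD('n) else 0)"
    by (simp only: orth_b)
  also have "\<dots> = (\<Sum>t\<in>{0..<int p}. if t = 0 then of_nat p ^ CARD('n) else 0)"
  proof (rule sum.cong[OF refl])
    fix t assume "t \<in> {0..<int p}"
    then have e: "(\<forall>i. int p dvd t * b$i) = (t = 0)" by (rule t_zero[OF assms])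
    show "(if \<forall>i. int p dvd (t *s b)$i then (of_nat p ^ CARD('n) :: complex) else 0) = (if t = 0 then of_nat p ^ CARD('n) else 0)"
      by (simp only: vector_smult_component e)
  qed
  also have "\<dots> = of_nat p ^ CARD('n)"
    using p0 by (subst sum.delta) auto
  finally have "of_nat (p * card {v\<in>box p. int p dvd ip b v}) = (of_nat (p ^ CARD('n)) :: complex)"
    by (simp only: of_nat_mult of_nat_power)
  then have "p * card {v\<in>box p. int p dvd ip b v} = p ^ CARD('n)"
    by (simp only: of_nat_eq_iff)
  moreover have "p ^ CARD('n) = p * p ^ (CARD('n) - 1)"
  proof -
    obtain k where k: "CARD('n) = Suc k" using zero_less_card_finite[where 'a='n] by (cases "CARD('n)") auto
    then show ?thesis by simp
  qed
  ultimately show ?thesis using p0 by simp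
qed



lemma t_unique:
  assumes "prime p" "\<not> int p dvd b" "int p dvd t1 * c + b" "int p dvd t2 * c + b"
    "t1 \<in> {0..<int p}" "t2 \<in> {0..<int p}"
  shows "t1 = t2"
proof -
  have pp: "prime (int p)" using assms(1) by simp
  have "\<not> int p dvd c"
  proof
    assume "int p dvd c"
    then have "int p dvd t1 * c" by simp
    then have "int p dvd b" using dvd_add_right_iff[OF \<open>int p dvd t1 * c\<close>] assms(3) by simp
    then show False using assms(2) by simp
  qed
  moreover have "int p dvd (t1 - t2) * c"
  proof -
    have "(t1 - t2) * c = (t1 * c + b) - (t2 * c + b)" by (simp add: algebra_simps)
    moreover have "int p dvd (t1 * c + b) - (t2 * c + b)" using assms(3,4) by (rule dvd_diff)
    ultimately show ?thesis by simp
  qed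
  ultimately have "int p dvd t1 - t2" using pp prime_dvd_mult_iff by blast
  then have "t1 mod int p = t2 mod int p" by (simp add: mod_eq_dvd_iff)
  then show ?thesis using assms(5,6) by simp
qed

lemma prod_if_one:
  "(\<Prod>i\<in>(UNIV::'n::finite set). if i = l then 1 else c) = (c::nat) ^ (CARD('n) - 1)"
proof -
  have "(\<Prod>i\<in>(UNIV::'n set). if i = l then 1 else c) = (\<Prod>i\<in>(UNIV::'n set). if i \<noteq> l then c else 1)"
    by (rule prod.cong) auto
  also have "\<dots> = (\<Prod>i\<in>{i\<in>(UNIV::'n set). i \<noteq> l}. c)"
    by (rule prod.inter_filter[symmetric]) simp
  also have "{i\<in>(UNIV::'n set). i \<noteq> l} = UNIV - {l}" by blast
  also have "(\<Prod>i\<in>UNIV - {l}. c) = c ^ (CARD('n) - 1)" by (simp add: card_Diff_singleton)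
  finally show ?thesis .
qed

lemma prime_bound:
  fixes a :: "int^'n^'n"
  assumes "prime p" "\<not> int p dvd a$l$k"
  shows "cmod (S_sum p a) \<le> real p ^ (CARD('n) * CARD('n) - CARD('n))"
proof -
  define N where "N = CARD('n)"
  have p0: "p > 0" using assms(1) prime_gt_0_nat by blast
  define T where "T = {0..<int p}"
  define P where "P t Y \<longleftrightarrow> (\<forall>i. int p dvd (t * cof Y l $ i + a$l$i))" for t Y
  have finT: "finite T" unfolding T_def by simp
  have S1: "S_sum p a = (\<Sum>X\<in>residue_matrices p. if int p dvd det X then ee p (linform a X) else 0)"
    unfolding S_sum_def ee_def using sum.inter_filter[OF finite_residue] by simp
  also have "\<dots> = (\<Sum>X\<in>residue_matrices p. (1 / of_nat p) * (\<Sum>t\<in>T. ee p (t * det X + linform a X)))"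
  proof (rule sum.cong[OF refl])
    fix X :: "int^'n^'n"
    have "(\<Sum>t\<in>T. ee p (t * det X + linform a X)) = ee p (linform a X) * (\<Sum>t\<in>T. ee p (det X * t))"
      by (simp add: ee_add sum_distrib_left mult.commute)
    also have "\<dots> = ee p (linform a X) * (if int p dvd det X then of_nat p else 0)"
      unfolding T_def using orth1[OF p0] by simp
    finally show "(if int p dvd det X then ee p (linform a X) else 0) = (1 / of_nat p) * (\<Sum>t\<in>T. ee p (t * det X + linform a X))"
      using p0 by simp
  qed
  also have "\<dots> = (1 / of_nat p) * (\<Sum>X\<in>residue_matrices p. \<Sum>t\<in>T. ee p (t * det X + linform a X))"
    by (simp add: sum_distrib_left)
  also have "\<dots> = (1 / of_nat p) * (\<Sum>Y\<in>R0 p l. \<Sum>v\<in>box p. \<Sum>t\<in>T. ee p (t * det (upd Y l v) + linform a (upd Y l v)))"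
    by (subst decomp[of _ _ l]) (rule refl)
  also have "\<dots> = (1 / of_nat p) * (\<Sum>Y\<in>R0 p l. \<Sum>t\<in>T. \<Sum>v\<in>box p. ee p (t * det (upd Y l v) + linform a (upd Y l v)))"
  proof -
    have sw: "\<And>Y. (\<Sum>v\<in>box p. \<Sum>t\<in>T. ee p (t * det (upd Y l v) + linform a (upd Y l v)))
       = (\<Sum>t\<in>T. \<Sum>v\<in>box p. ee p (t * det (upd Y l v) + linform a (upd Y l v)))"
      by (rule sum.swap)
    show ?thesis by (simp only: sw)
  qed
  also have "\<dots> = (1 / of_nat p) * (\<Sum>Y\<in>R0 p l. \<Sum>t\<in>T. ee p (linform a Y) * (if P t Y then of_nat p ^ N else 0))"
  proof -
    have "\<And>Y t. Y \<in> R0 p l \<Longrightarrow> (\<Sum>v\<in>box p. ee p (t * det (upd Y l v) + linform a (upd Y l v)))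
        = ee p (linform a Y) * (if P t Y then of_nat p ^ N else 0)"
    proof -
      fix Y :: "int^'n^'n" and t
      assume "Y \<in> R0 p l"
      then have "Y$l \<in> (if l = l then {0} else box p)" unfolding R0_def by blast
      then have "Y$l = 0" by simp
      then show "(\<Sum>v\<in>box p. ee p (t * det (upd Y l v) + linform a (upd Y l v)))
        = ee p (linform a Y) * (if P t Y then of_nat p ^ N else 0)"
        unfolding P_def N_def by (rule inner_sum[OF _ p0])
    qed
    then show ?thesis by simp
  qed
  finally have Seq: "S_sum p a = (1 / of_nat p) * (\<Sum>Y\<in>R0 p l. \<Sum>t\<in>T. ee p (linform a Y) * (if P t Y then of_nat p ^ N else 0))" .
  define Q where "Q = {z \<in> R0 p l \<times> T. P (snd z) (fst z)}"
  have finQ: "finite Q"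
  proof -
    have "finite (R0 p l \<times> T)" using finite_R0 finT by (rule finite_cartesian_product)
    then show ?thesis unfolding Q_def by (rule finite_subset[rotated]) auto
  qed
  have "cmod (S_sum p a) \<le> (1 / real p) * (\<Sum>Y\<in>R0 p l. \<Sum>t\<in>T. (if P t Y then real p ^ N else 0))"
  proof -
    have "cmod (\<Sum>Y\<in>R0 p l. \<Sum>t\<in>T. ee p (linform a Y) * (if P t Y then of_nat p ^ N else 0))
       \<le> (\<Sum>Y\<in>R0 p l. \<Sum>t\<in>T. (if P t Y then real p ^ N else 0))"
      by (intro sum_norm_le) (simp add: norm_mult ee_norm norm_power)
    moreover have "cmod (S_sum p a) = cmod (1 / of_nat p :: complex) * cmod (\<Sum>Y\<in>R0 p l. \<Sum>t\<in>T. ee p (linform a Y) * (if P t Y then of_nat p ^ N else 0))"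
      unfolding Seq by (rule norm_mult)
    moreover have "cmod (1 / of_nat p :: complex) = 1 / real p" by (simp add: norm_divide)
    ultimately show ?thesis by (simp add: divide_right_mono)
  qed
  also have "(\<Sum>Y\<in>R0 p l. \<Sum>t\<in>T. (if P t Y then real p ^ N else 0)) = (\<Sum>z\<in>R0 p l \<times> T. (if P (snd z) (fst z) then real p ^ N else 0))"
    by (simp add: sum.cartesian_product case_prod_unfold)
  also have "\<dots> = real p ^ N * real (card Q)"
    unfolding Q_def using finite_R0 finT by (subst sum_ind) auto
  finally have bound1: "cmod (S_sum p a) \<le> 1 / real p * (real p ^ N * real (card Q))" .
  define Hp where "Hp = {v\<in>box p. int p dvd ip (a$l) v}"
  define H where "H = {Y::int^'n^'n. \<forall>i. Y$i \<in> (if i = l then {0} else Hp)}"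
  have cardHp: "card Hp = p ^ (N - 1)" unfolding Hp_def N_def
    by (rule hyper_card[OF assms(1), of "a$l" k]) (use assms(2) in simp)
  have finHp: "finite Hp" unfolding Hp_def by (rule finite_subset[OF _ finite_box]) auto
  have finH: "finite H" unfolding H_def by (rule finite_vecset) (simp add: finHp)
  have cardH: "card H = (p ^ (N - 1)) ^ (N - 1)"
  proof -
    have "card H = (\<Prod>i\<in>UNIV. card (if i = l then {0} else Hp))" unfolding H_def by (rule card_vecset)
    also have "\<dots> = (\<Prod>i\<in>(UNIV::'n set). if i = l then 1 else p ^ (N - 1))"
      by (intro prod.cong) (auto simp: cardHp)
    also have "\<dots> = (p ^ (N - 1)) ^ (N - 1)" unfolding N_def by (rule prod_if_one)
    finally show ?thesis .
  qed
  have "card Q \<le> card H"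
  proof (rule card_inj_on_le[where f = fst, OF _ _ finH])
    show "inj_on fst Q"
    proof (rule inj_onI)
      fix z1 z2 assume z: "z1 \<in> Q" "z2 \<in> Q" "fst z1 = fst z2"
      obtain Y t1 where z1: "z1 = (Y, t1)" by (cases z1)
      obtain t2 where z2: "z2 = (Y, t2)" using z(3) z1 by (cases z2) auto
      have "t1 = t2"
        by (rule t_unique[OF assms(1) assms(2), of t1 "cof Y l $ k" t2])
           (use z z1 z2 in \<open>auto simp: Q_def P_def T_def\<close>)
      then show "z1 = z2" using z1 z2 by simp
    qed
    show "fst ` Q \<subseteq> H"
    proof
      fix Y assume "Y \<in> fst ` Q"
      then obtain t where Yt: "(Y, t) \<in> Q" by auto
      then have YR: "Y \<in> R0 p l" and PY: "P t Y" unfolding Q_def by auto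
      have "Y$i \<in> (if i = l then {0} else Hp)" for i
      proof (cases "i = l")
        case True
        have "Y$l \<in> (if l = l then {0} else box p)" using YR unfolding R0_def by blast
        then show ?thesis using True by simp
      next
        case False
        have "Y$i \<in> (if i = l then {0} else box p)" using YR unfolding R0_def by blast
        then have box: "Y$i \<in> box p" using False by simp
        have "ip (t *s cof Y l + a$l) (Y$i) = ip (a$l) (Y$i)"
          using cof_orth[OF False] by (simp add: ip_lin)
        moreover have "int p dvd ip (t *s cof Y l + a$l) (Y$i)"
          unfolding ip_def using PY unfolding P_def by (intro dvd_sum) simp
        ultimately show ?thesis using False box unfolding Hp_def by simp
      qed
      then show "Y \<in> H" unfolding H_def by blast
    qed
  qed
  then have "card Q \<le> p ^ ((N - 1) * (N - 1))"
    using cardH by (simp add: power_mult)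
  then have "real (card Q) \<le> real (p ^ ((N - 1) * (N - 1)))" by (simp only: of_nat_le_iff)
  then have "real (card Q) \<le> real p ^ ((N - 1) * (N - 1))" by (simp only: of_nat_power)
  then have "cmod (S_sum p a) \<le> 1 / real p * (real p ^ N * real p ^ ((N - 1) * (N - 1)))"
  proof -
    have "1 / real p * (real p ^ N * real (card Q)) \<le> 1 / real p * (real p ^ N * real p ^ ((N - 1) * (N - 1)))"
      using \<open>real (card Q) \<le> real p ^ ((N - 1) * (N - 1))\<close> by (intro mult_left_mono) auto
    then show ?thesis using bound1 by (rule order_trans[rotated])
  qed
  also have "\<dots> = real p ^ (N * N - N)"
  proof -
    have N1: "N \<ge> 1" unfolding N_def by (simp add: Suc_leI)
    have "N * N - N = (N - 1) + (N - 1) * (N - 1)"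
      using N1 by (cases N) (auto simp: algebra_simps)
    moreover have "real p ^ N = real p * real p ^ (N - 1)"
    proof -
      obtain k where "N = Suc k" using N1 by (cases N) auto
      then show ?thesis by simp
    qed
    ultimately show ?thesis using p0 by (simp add: power_add)
  qed
  finally show ?thesis unfolding N_def .
qed



definition sc :: "int \<Rightarrow> int^'n^'n \<Rightarrow> int^'n^'n" where
  "sc c a = (\<chi> i j. c * a$i$j)"

definition mm :: "nat \<Rightarrow> int^'n^'n \<Rightarrow> int^'n^'n" where
  "mm m X = (\<chi> i j. X$i$j mod int m)"

lemma linform_sc: "linform (sc c a) X = c * linform a X"
  unfolding linform_def sc_def by (simp add: sum_distrib_left algebra_simps)

lemma S_sum_alt: "S_sum m a = (\<Sum>X\<in>{X\<in>residue_matrices m. int m dvd det X}. ee m (linform a X))"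
  unfolding S_sum_def ee_def by simp

lemma ee_split:
  assumes "m1 > 0" "m2 > 0" "u * int m1 + v * int m2 = 1"
  shows "ee m1 (v * L) * ee m2 (u * L) = ee (m1 * m2) L"
proof -
  have h: "of_int v * of_nat m2 + of_int u * of_nat m1 = (1::complex)"
  proof -
    have "of_int (u * int m1 + v * int m2) = (1::complex)" using assms(3) by simp
    then show ?thesis by (simp add: algebra_simps)
  qed
  have "2 * of_real pi * \<i> * of_int (v * L) / of_nat m1 + 2 * of_real pi * \<i> * of_int (u * L) / of_nat m2
      = 2 * of_real pi * \<i> * of_int L * (of_int v * of_nat m2 + of_int u * of_nat m1) / (of_nat m1 * of_nat m2)"
    using assms(1,2) by (simp add: field_simps)
  also have "\<dots> = 2 * of_real pi * \<i> * of_int L / of_nat (m1 * m2)" using h by simp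
  finally show ?thesis unfolding ee_def by (simp add: exp_add[symmetric])
qed

lemma mm_in: "m > 0 \<Longrightarrow> mm m X \<in> residue_matrices m"
  unfolding mm_def residue_matrices_def by simp

lemma mm_mod: "\<And>i j. mm m X $i$j mod int m = X$i$j mod int m"
  unfolding mm_def by simp

lemma crt_mult:
  fixes a :: "int^'n^'n"
  assumes cop: "coprime m1 m2" and m1: "m1 > 0" and m2: "m2 > 0" and uv: "u * int m1 + v * int m2 = 1"
  shows "S_sum (m1 * m2) a = S_sum m1 (sc v a) * S_sum m2 (sc u a)"
proof -
  define T where "T m = {X\<in>residue_matrices m. int m dvd det (X::int^'n^'n)}" for m
  have copi: "coprime (int m1) (int m2)" using cop by simp
  have d0: "m1 * m2 > 0" using m1 m2 by simp
  have dvd_prod: "int (m1 * m2) dvd x" if "int m1 dvd x" "int m2 dvd x" for x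
    using divides_mult[OF that copi] by simp
  have detm: "int m dvd det X \<longleftrightarrow> int m dvd det (mm m X)" for m X
  proof -
    have "det (mm m X) mod int m = det X mod int m" by (rule det_mod[OF mm_mod])
    then show ?thesis by (simp only: dvd_eq_mod_eq_0)
  qed
  define \<phi> where "\<phi> X = (mm m1 X, mm m2 X)" for X :: "int^'n^'n"
  have bij: "bij_betw \<phi> (T (m1 * m2)) (T m1 \<times> T m2)"
  proof (rule bij_betwI')
    fix X Y assume X: "X \<in> T (m1 * m2)" and Y: "Y \<in> T (m1 * m2)"
    show "(\<phi> X = \<phi> Y) = (X = Y)"
    proof
      assume e: "\<phi> X = \<phi> Y"
      have "X$i$j = Y$i$j" for i j
      proof -
        have "X$i$j mod int m1 = Y$i$j mod int m1" "X$i$j mod int m2 = Y$i$j mod int m2"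
          using e unfolding \<phi>_def mm_def by (auto simp: vec_eq_iff)
        then have "int m1 dvd X$i$j - Y$i$j" "int m2 dvd X$i$j - Y$i$j"
          by (simp_all add: mod_eq_dvd_iff)
        then have "int (m1 * m2) dvd X$i$j - Y$i$j" by (rule dvd_prod)
        then have "X$i$j mod int (m1 * m2) = Y$i$j mod int (m1 * m2)" by (simp add: mod_eq_dvd_iff)
        moreover have "X$i$j \<in> {0..<int (m1 * m2)}" "Y$i$j \<in> {0..<int (m1 * m2)}"
          using X Y unfolding T_def residue_matrices_def by auto
        ultimately show ?thesis by simp
      qed
      then show "X = Y" by (simp add: vec_eq_iff)
    qed simp
  next
    fix X assume X: "X \<in> T (m1 * m2)"
    then have "int m1 dvd det X" "int m2 dvd det X" unfolding T_def by auto
    then show "\<phi> X \<in> T m1 \<times> T m2"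
      unfolding \<phi>_def T_def using mm_in[OF m1] mm_in[OF m2] detm by auto
  next
    fix Z assume Z: "Z \<in> T m1 \<times> T m2"
    obtain X1 X2 where Zx: "Z = (X1, X2)" "X1 \<in> T m1" "X2 \<in> T m2" using Z by auto
    define X where "X = (\<chi> i j. (X1$i$j * v * int m2 + X2$i$j * u * int m1) mod int (m1 * m2))"
    have XR: "X \<in> residue_matrices (m1 * m2)" unfolding X_def residue_matrices_def using d0 by simp
    have e1: "mm m1 X = X1"
    proof -
      have "X$i$j mod int m1 = X1$i$j" for i j
      proof -
        have "X$i$j mod int m1 = (X1$i$j * v * int m2 + X2$i$j * u * int m1) mod int m1"
          unfolding X_def by (simp add: mod_mod_cancel)
        also have "X1$i$j * v * int m2 + X2$i$j * u * int m1 = X1$i$j + (X2$i$j * u - X1$i$j * u) * int m1"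
        proof -
          have vm: "v * int m2 = 1 - u * int m1" using uv by simp
          have "X1$i$j * v * int m2 = X1$i$j * (v * int m2)" by (simp only: mult.assoc)
          also have "\<dots> = X1$i$j * (1 - u * int m1)" by (simp only: vm)
          finally show ?thesis by (simp add: algebra_simps)
        qed
        also have "(X1$i$j + (X2$i$j * u - X1$i$j * u) * int m1) mod int m1 = X1$i$j mod int m1" by simp
        also have "\<dots> = X1$i$j" using Zx(2) unfolding T_def residue_matrices_def by auto
        finally show ?thesis .
      qed
      then show ?thesis unfolding mm_def by (simp add: vec_eq_iff)
    qed
    have e2: "mm m2 X = X2"
    proof -
      have "X$i$j mod int m2 = X2$i$j" for i j
      proof -
        have "X$i$j mod int m2 = (X1$i$j * v * int m2 + X2$i$j * u * int m1) mod int m2"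
          unfolding X_def by (simp add: mod_mod_cancel)
        also have "X1$i$j * v * int m2 + X2$i$j * u * int m1 = X2$i$j + (X1$i$j * v - X2$i$j * v) * int m2"
        proof -
          have um: "u * int m1 = 1 - v * int m2" using uv by simp
          have "X2$i$j * u * int m1 = X2$i$j * (u * int m1)" by (simp only: mult.assoc)
          also have "\<dots> = X2$i$j * (1 - v * int m2)" by (simp only: um)
          finally show ?thesis by (simp add: algebra_simps)
        qed
        also have "(X2$i$j + (X1$i$j * v - X2$i$j * v) * int m2) mod int m2 = X2$i$j mod int m2" by simp
        also have "\<dots> = X2$i$j" using Zx(3) unfolding T_def residue_matrices_def by auto
        finally show ?thesis .
      qed
      then show ?thesis unfolding mm_def by (simp add: vec_eq_iff)
    qed
    have "int m1 dvd det X" using detm[of m1 X] e1 Zx(2) unfolding T_def by simp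
    moreover have "int m2 dvd det X" using detm[of m2 X] e2 Zx(3) unfolding T_def by simp
    ultimately have "int (m1 * m2) dvd det X" by (rule dvd_prod)
    then have "X \<in> T (m1 * m2)" using XR unfolding T_def by simp
    moreover have "Z = \<phi> X" unfolding \<phi>_def using e1 e2 Zx(1) by simp
    ultimately show "\<exists>X\<in>T (m1 * m2). Z = \<phi> X" by blast
  qed
  have "S_sum m1 (sc v a) * S_sum m2 (sc u a)
      = (\<Sum>X1\<in>T m1. \<Sum>X2\<in>T m2. ee m1 (linform (sc v a) X1) * ee m2 (linform (sc u a) X2))"
    unfolding S_sum_alt T_def by (simp add: sum_product)
  also have "\<dots> = (\<Sum>Z\<in>T m1 \<times> T m2. ee m1 (linform (sc v a) (fst Z)) * ee m2 (linform (sc u a) (snd Z)))"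
    by (simp add: sum.cartesian_product case_prod_unfold)
  also have "\<dots> = (\<Sum>X\<in>T (m1 * m2). ee m1 (linform (sc v a) (fst (\<phi> X))) * ee m2 (linform (sc u a) (snd (\<phi> X))))"
    using sum.reindex_bij_betw[OF bij, of "\<lambda>Z. ee m1 (linform (sc v a) (fst Z)) * ee m2 (linform (sc u a) (snd Z))"]
    by simp
  also have "\<dots> = (\<Sum>X\<in>T (m1 * m2). ee (m1 * m2) (linform a X))"
  proof (rule sum.cong[OF refl])
    fix X :: "int^'n^'n"
    have "ee m1 (linform (sc v a) (mm m1 X)) = ee m1 (v * linform a X)"
      unfolding linform_sc
      by (rule ee_cong[OF m1], rule mod_mult_cong[OF refl], rule linform_mod, rule mm_mod)
    moreover have "ee m2 (linform (sc u a) (mm m2 X)) = ee m2 (u * linform a X)"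
      unfolding linform_sc
      by (rule ee_cong[OF m2], rule mod_mult_cong[OF refl], rule linform_mod, rule mm_mod)
    ultimately show "ee m1 (linform (sc v a) (fst (\<phi> X))) * ee m2 (linform (sc u a) (snd (\<phi> X))) = ee (m1 * m2) (linform a X)"
      unfolding \<phi>_def using ee_split[OF m1 m2 uv] by simp
  qed
  also have "\<dots> = S_sum (m1 * m2) a" unfolding S_sum_alt T_def by simp
  finally show ?thesis by simp
qed



lemma gf_dvd_d: "gcd_form a d dvd int d"
  unfolding gcd_form_def by (rule Gcd_dvd) simp

lemma gf_dvd_a: "gcd_form a d dvd a$i$j"
  unfolding gcd_form_def by (rule Gcd_dvd) auto

lemma gf_greatest: "x dvd int d \<Longrightarrow> (\<And>i j. x dvd a$i$j) \<Longrightarrow> x dvd gcd_form a d"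
  unfolding gcd_form_def by (rule Gcd_greatest) auto

lemma gf_pos: "d > 0 \<Longrightarrow> gcd_form a d \<ge> 1"
proof -
  assume d: "d > 0"
  have "gcd_form a d \<ge> 0" unfolding gcd_form_def by simp
  moreover have "gcd_form a d \<noteq> 0" using gf_dvd_d[of a d] d by auto
  ultimately show ?thesis by simp
qed

lemma trivial_bound: "cmod (S_sum d a) \<le> real d ^ (CARD('n) * CARD('n))"
  for a :: "int^'n^'n"
proof -
  have "cmod (S_sum d a) \<le> (\<Sum>X\<in>{X\<in>residue_matrices d. int d dvd det X}. cmod (ee d (linform a X)))"
    unfolding S_sum_alt by (rule norm_sum)
  also have "\<dots> = (\<Sum>X\<in>{X\<in>residue_matrices d. int d dvd det (X::int^'n^'n)}. 1)"
    by (simp add: ee_norm)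
  also have "\<dots> = real (card {X\<in>residue_matrices d. int d dvd det (X::int^'n^'n)})" by simp
  also have "\<dots> \<le> real (card (residue_matrices d :: (int^'n^'n) set))"
    by (intro of_nat_mono card_mono finite_residue) auto
  also have "\<dots> = real d ^ (CARD('n) * CARD('n))" by (simp add: card_residue)
  finally show ?thesis .
qed

lemma prime_case:
  fixes a :: "int^'n^'n"
  assumes "prime p"
  shows "cmod (S_sum p a) \<le> real p ^ (CARD('n) * CARD('n) - CARD('n)) * real_of_int (gcd_form a p) ^ CARD('n)"
proof -
  define N where "N = CARD('n)"
  have p0: "p > 0" using assms prime_gt_0_nat by blast
  have g1: "real_of_int (gcd_form a p) \<ge> 1" using gf_pos[OF p0] by simp
  show ?thesis
  proof (cases "\<exists>l k. \<not> int p dvd a$l$k")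
    case True
    then obtain l k where "\<not> int p dvd a$l$k" by blast
    then have "cmod (S_sum p a) \<le> real p ^ (N * N - N)" unfolding N_def by (rule prime_bound[OF assms])
    also have "\<dots> \<le> real p ^ (N * N - N) * real_of_int (gcd_form a p) ^ N"
    proof -
      have "1 \<le> real_of_int (gcd_form a p) ^ N" using g1 by (rule one_le_power)
      then have "real p ^ (N * N - N) * 1 \<le> real p ^ (N * N - N) * real_of_int (gcd_form a p) ^ N"
        by (intro mult_left_mono) auto
      then show ?thesis by simp
    qed
    finally show ?thesis unfolding N_def .
  next
    case False
    then have "int p dvd gcd_form a p" by (intro gf_greatest) auto
    moreover have "0 < gcd_form a p" using gf_pos[OF p0, of a] by simp
    ultimately have "int p \<le> gcd_form a p" by (rule zdvd_imp_le)
    then have ge: "real p \<le> real_of_int (gcd_form a p)" by linarith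
    have "cmod (S_sum p a) \<le> real p ^ (N * N)" unfolding N_def by (rule trivial_bound)
    also have "\<dots> = real p ^ (N * N - N) * real p ^ N"
      by (simp add: power_add[symmetric])
    also have "\<dots> \<le> real p ^ (N * N - N) * real_of_int (gcd_form a p) ^ N"
      using ge by (intro mult_left_mono power_mono) auto
    finally show ?thesis unfolding N_def .
  qed
qed

lemma main_bound:
  fixes a :: "int^'n^'n"
  assumes "d \<ge> 1" "squarefree d"
  shows "cmod (S_sum d a) \<le> real d ^ (CARD('n) * CARD('n) - CARD('n)) * real_of_int (gcd_form a d) ^ CARD('n)"
  using assms
proof (induction d arbitrary: a rule: less_induct)
  case (less d)
  define N where "N = CARD('n)"
  show ?case
  proof (cases "d = 1")
    case True
    have "cmod (S_sum d a) \<le> 1" using trivial_bound[of d a] True by simp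
    also have "\<dots> \<le> real_of_int (gcd_form a d) ^ N" using gf_pos[of d a] True by simp
    finally show ?thesis using True unfolding N_def by simp
  next
    case False
    then obtain p where p: "prime p" "p dvd d" using prime_factor_nat by blast
    define m where "m = d div p"
    have dpm: "d = p * m" unfolding m_def using p(2) by simp
    have p0: "p > 0" using p(1) prime_gt_0_nat by blast
    have m0: "m > 0" using dpm less.prems(1) by (cases m) auto
    have "p > 1" using p(1) prime_gt_1_nat by blast
    then have mlt: "m < d" using dpm m0 by simp
    have sqm: "squarefree m" using less.prems(2) dpm squarefree_multD by blast
    have "\<not> p dvd m"
    proof
      assume "p dvd m"
      then have "p ^ 2 dvd d" using dpm by (simp add: power2_eq_square)
      then have "p dvd 1" using less.prems(2) squarefreeD by blast
      then show False using p(1) by simp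
    qed
    then have cop: "coprime p m" using prime_imp_coprime p(1) by blast
    obtain u v where uv: "u * int p + v * int m = gcd (int p) (int m)" using bezout_int by blast
    have "gcd (int p) (int m) = 1" using cop by simp
    with uv have uv1: "u * int p + v * int m = 1" by simp
    have copv: "coprime (int p) v"
    proof -
      have "gcd (int p) v dvd u * int p + v * int m" by (simp add: dvd_add)
      then have "is_unit (gcd (int p) v)" using uv1 by simp
      then show ?thesis by (simp only: is_unit_gcd)
    qed
    have copu: "coprime (int m) u"
    proof -
      have "gcd (int m) u dvd u * int p + v * int m" by (simp add: dvd_add)
      then have "is_unit (gcd (int m) u)" using uv1 by simp
      then show ?thesis by (simp only: is_unit_gcd)
    qed
    have Seq: "S_sum d a = S_sum p (sc v a) * S_sum m (sc u a)"
      unfolding dpm by (rule crt_mult[OF cop p0 m0 uv1])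
    define g1 where "g1 = gcd_form (sc v a) p"
    define g2 where "g2 = gcd_form (sc u a) m"
    define g where "g = gcd_form a d"
    have B1: "cmod (S_sum p (sc v a)) \<le> real p ^ (N * N - N) * real_of_int g1 ^ N"
      unfolding g1_def N_def by (rule prime_case[OF p(1)])
    have B2: "cmod (S_sum m (sc u a)) \<le> real m ^ (N * N - N) * real_of_int g2 ^ N"
      unfolding g2_def N_def using less.IH[OF mlt] m0 sqm by simp
    have g1pos: "g1 \<ge> 1" unfolding g1_def by (rule gf_pos[OF p0])
    have g2pos: "g2 \<ge> 1" unfolding g2_def by (rule gf_pos[OF m0])
    have d0: "d > 0" using less.prems(1) by simp
    have gpos: "g \<ge> 1" unfolding g_def by (rule gf_pos[OF d0])
    have "g1 * g2 dvd g"
    proof -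
      have g1p: "g1 dvd int p" unfolding g1_def by (rule gf_dvd_d)
      have g2m: "g2 dvd int m" unfolding g2_def by (rule gf_dvd_d)
      have cg: "coprime g1 g2" using coprime_divisors[OF g1p g2m] cop by simp
      have cg1: "coprime g1 v" using coprime_divisors[OF g1p dvd_refl copv] .
      have cg2: "coprime g2 u" using coprime_divisors[OF g2m dvd_refl copu] .
      show ?thesis unfolding g_def
      proof (rule gf_greatest)
        show "g1 * g2 dvd int d" unfolding dpm using g1p g2m by (simp add: mult_dvd_mono)
        fix i j
        have "g1 dvd v * a$i$j" using gf_dvd_a[of "sc v a" p i j] unfolding g1_def sc_def by simp
        then have "g1 dvd a$i$j" using cg1 coprime_dvd_mult_right_iff by blast
        moreover have "g2 dvd u * a$i$j" using gf_dvd_a[of "sc u a" m i j] unfolding g2_def sc_def by simp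
        then have "g2 dvd a$i$j" using cg2 coprime_dvd_mult_right_iff by blast
        ultimately show "g1 * g2 dvd a$i$j" using divides_mult cg by blast
      qed
    qed
    then have "g1 * g2 \<le> g" using gpos by (intro zdvd_imp_le) auto
    then have gle: "real_of_int g1 * real_of_int g2 \<le> real_of_int g"
      by (simp only: of_int_mult[symmetric] of_int_le_iff)
    have "cmod (S_sum d a) = cmod (S_sum p (sc v a)) * cmod (S_sum m (sc u a))"
      unfolding Seq by (simp add: norm_mult)
    also have "\<dots> \<le> (real p ^ (N * N - N) * real_of_int g1 ^ N) * (real m ^ (N * N - N) * real_of_int g2 ^ N)"
      using B1 B2 g1pos by (intro mult_mono) auto
    also have "\<dots> = real d ^ (N * N - N) * (real_of_int g1 * real_of_int g2) ^ N"
      unfolding dpm by (simp add: power_mult_distrib algebra_simps)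
    also have "\<dots> \<le> real d ^ (N * N - N) * real_of_int g ^ N"
      using gle g1pos g2pos by (intro mult_left_mono power_mono) auto
    finally show ?thesis unfolding g_def N_def .
  qed
qed



theorem lemma3p7:
  shows "\<exists>f :: nat \<Rightarrow> real. (f \<longlonglongrightarrow> 0) \<and>
    (\<forall>(d::nat) (a :: int^'n^'n). d \<ge> 1 \<longrightarrow> squarefree d \<longrightarrow>
       cmod (S_sum d a) \<le> real d powr (real (CARD('n))^2 + f d) *
         (if is_monomial a
          then (real_of_int (gcd_form a d) / real d) ^ CARD('n)
          else (real_of_int (gcd_form a d) / real d) powr ((real (CARD('n)) + 1) / 2)))"
proof (rule exI[of _ "\<lambda>_. 0"], intro conjI allI impI)
  show "(\<lambda>_. 0::real) \<longlonglongrightarrow> 0" by simp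
next
  fix d :: nat and a :: "int^'n^'n"
  assume d1: "d \<ge> 1" and sq: "squarefree d"
  define N where "N = CARD('n)"
  define g where "g = real_of_int (gcd_form a d)"
  define x where "x = g / real d"
  have d0: "real d > 0" using d1 by simp
  have g1: "g \<ge> 1" unfolding g_def using gf_pos[of d a] d1 by simp
  have gle: "g \<le> real d"
  proof -
    have "gcd_form a d \<le> int d" using gf_dvd_d[of a d] d1 by (intro zdvd_imp_le) auto
    then show ?thesis unfolding g_def by linarith
  qed
  have x0: "x > 0" unfolding x_def using g1 d0 by simp
  have x1: "x \<le> 1" unfolding x_def using gle d0 by simp
  have N1: "N \<ge> 1" unfolding N_def by (simp add: Suc_leI)
  have M: "cmod (S_sum d a) \<le> real d ^ (N * N - N) * g ^ N"
    unfolding N_def g_def by (rule main_bound[OF d1 sq])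
  have pw: "real d powr (real N ^ 2 + 0) = real d ^ (N * N)"
  proof -
    have "real N ^ 2 + 0 = real (N * N)" by (simp add: power2_eq_square)
    then show ?thesis using powr_realpow[OF d0, of "N * N"] by simp
  qed
  have eq: "real d ^ (N * N - N) * g ^ N = real d ^ (N * N) * x ^ N"
  proof -
    have "N \<le> N * N" using N1 by simp
    then have "real d ^ (N * N) = real d ^ (N * N - N) * real d ^ N"
      by (simp add: power_add[symmetric])
    then show ?thesis unfolding x_def using d0 by (simp add: power_divide)
  qed
  have xle: "x ^ N \<le> (if is_monomial a then x ^ N else x powr ((real N + 1) / 2))"
  proof (cases "is_monomial a")
    case False
    have "x ^ N = x powr (real N)" using powr_realpow[OF x0] by simp
    also have "\<dots> \<le> x powr ((real N + 1) / 2)"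
      using N1 x0 x1 by (intro powr_mono') auto
    finally show ?thesis using False by simp
  qed simp
  have "cmod (S_sum d a) \<le> real d ^ (N * N) * x ^ N" using M eq by simp
  also have "\<dots> \<le> real d ^ (N * N) * (if is_monomial a then x ^ N else x powr ((real N + 1) / 2))"
    using xle d0 by (intro mult_left_mono) auto
  finally show "cmod (S_sum d a) \<le> real d powr (real (CARD('n))^2 + 0) *
         (if is_monomial a
          then (real_of_int (gcd_form a d) / real d) ^ CARD('n)
          else (real_of_int (gcd_form a d) / real d) powr ((real (CARD('n)) + 1) / 2))"
    using pw unfolding x_def g_def N_def by simp
qed


end
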